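(* Let $X$ be a $T_0$ topological space which is $k$-bounded sober. Then the following are equivalent: (i) the convergence class $\mathcal{I}$ of $\operatorname{Irr}$-convergence on $X$ is topological; (ii) $X$ is $\operatorname{Irr}$-continuous.
   Context: For a topological space $X$, a nonempty subset $E\subseteq X$ is irreducible if whenever $E\subseteq A_1\cup A_2$ with $A_1,A_2$ closed, then $E\subseteq A_1$ or $E\subseteq A_2$. The specialisation order is $x\le y$ iff $x\in\operatorname{cl}(\{y\})$; $\uparrow x=\{z: z\ge x\}$; suprema $\bigvee$ are least upper bounds with respect to this order. $\operatorname{Irr}^+(X)$ denotes the set of irreducible subsets of $X$ whose supremum exists. $X$ is $k$-bounded sober if every closed set $F\in\operatorname{Irr}^+(X)$ is the closure of a unique singleton. The $\operatorname{Irr}$-way-below relation: $x\ll_{\operatorname{Irr}} y$ iff for every $E\in\operatorname{Irr}^+(X)$ with $\bigvee E\ge y$ one has $E\cap\uparrow x\neq\emptyset$; write $\twoheaddownarrow_{\operatorname{Irr}} x=\{y: y\ll_{\operatorname{Irr}} x\}$. $X$ is $\operatorname{Irr}$-continuous if for every $x\in X$, $\twoheaddownarrow_{\operatorname{Irr}} x$ is irreducible in $X$ and $x=\bigvee\twoheaddownarrow_{\operatorname{Irr}} x$. A net $(x_i)_{i\in I}$ in $X$ is a map from a preorder $(I,\le)$ to $X$. A net $(x_i)_{i\in I}$ $\operatorname{Irr}$-converges to $y$ if there is $E\in\operatorname{Irr}^+(X)$ with $\bigvee E\ge y$ such that for each $e\in E$ there is $k(e)\in I$ with $x_i\ge e$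 for all $i\ge k(e)$. $\mathcal{I}$ is the relation between nets in $X$ and points of $X$ consisting of all pairs $((x_i)_{i\in I},y)$ with $(x_i)$ $\operatorname{Irr}$-converging to $y$. A convergence class $\mathcal{S}$ on $X$ is topological if there is a topology $\sigma$ on $X$ such that $((x_i),x)\in\mathcal{S}$ iff for every $U\in\sigma$ with $x\in U$ there is $i_0$ with $x_i\in U$ for all $i\ge i_0$. *)

theory Defs
  imports "HOL-Analysis.Analysis"
begin

definition spec_le :: "'a topology \<Rightarrow> 'a \<Rightarrow> 'a \<Rightarrow> bool" where
  "spec_le X x y \<longleftrightarrow> x \<in> topspace X \<and> y \<in> topspace X \<and> x \<in> X closure_of {y}"

definition spec_up :: "'a topology \<Rightarrow> 'a \<Rightarrow> 'a set" where
  "spec_up X x = {z \<in> topspace X. spec_le X x z}"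

definition is_spec_sup :: "'a topology \<Rightarrow> 'a set \<Rightarrow> 'a \<Rightarrow> bool" where
  "is_spec_sup X E s \<longleftrightarrow> s \<in> topspace X \<and> (\<forall>e\<in>E. spec_le X e s) \<and>
     (\<forall>u\<in>topspace X. (\<forall>e\<in>E. spec_le X e u) \<longrightarrow> spec_le X s u)"

definition spec_sup :: "'a topology \<Rightarrow> 'a set \<Rightarrow> 'a" where
  "spec_sup X E = (THE s. is_spec_sup X E s)"

definition irreducible_in :: "'a topology \<Rightarrow> 'a set \<Rightarrow> bool" where
  "irreducible_in X E \<longleftrightarrow> E \<noteq> {} \<and> E \<subseteq> topspace X \<and>
     (\<forall>A1 A2. closedin X A1 \<and> closedin X A2 \<and> E \<subseteq> A1 \<union> A2 \<longrightarrow> E \<subseteq> A1 \<or> E \<subseteq> A2)"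

definition Irr_plus :: "'a topology \<Rightarrow> 'a set set" where
  "Irr_plus X = {E. irreducible_in X E \<and> (\<exists>s. is_spec_sup X E s)}"

definition k_bounded_sober :: "'a topology \<Rightarrow> bool" where
  "k_bounded_sober X \<longleftrightarrow> (\<forall>F. closedin X F \<and> F \<in> Irr_plus X \<longrightarrow>
     (\<exists>!x. x \<in> topspace X \<and> F = X closure_of {x}))"

definition Irr_way_below :: "'a topology \<Rightarrow> 'a \<Rightarrow> 'a \<Rightarrow> bool" where
  "Irr_way_below X x y \<longleftrightarrow> x \<in> topspace X \<and> y \<in> topspace X \<and>
     (\<forall>E\<in>Irr_plus X. spec_le X y (spec_sup X E) \<longrightarrow> E \<inter> spec_up X x \<noteq> {})"

definition Irr_waydown :: "'a topology \<Rightarrow> 'a \<Rightarrow> 'a set" where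
  "Irr_waydown X x = {y \<in> topspace X. Irr_way_below X y x}"

definition Irr_continuous :: "'a topology \<Rightarrow> bool" where
  "Irr_continuous X \<longleftrightarrow> (\<forall>x\<in>topspace X.
     irreducible_in X (Irr_waydown X x) \<and> is_spec_sup X (Irr_waydown X x) x)"

definition is_net :: "'a topology \<Rightarrow> 'i set \<Rightarrow> ('i \<Rightarrow> 'i \<Rightarrow> bool) \<Rightarrow> ('i \<Rightarrow> 'a) \<Rightarrow> bool" where
  "is_net X I le f \<longleftrightarrow> (\<forall>i\<in>I. le i i) \<and>
     (\<forall>i\<in>I. \<forall>j\<in>I. \<forall>k\<in>I. le i j \<and> le j k \<longrightarrow> le i k) \<and> f ` I \<subseteq> topspace X"

definition Irr_converges :: "'a topology \<Rightarrow> 'i set \<Rightarrow> ('i \<Rightarrow> 'i \<Rightarrow> bool) \<Rightarrow> ('i \<Rightarrow> 'a) \<Rightarrow> 'a \<Rightarrow> bool" where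
  "Irr_converges X I le f y \<longleftrightarrow> (\<exists>E\<in>Irr_plus X. spec_le X y (spec_sup X E) \<and>
     (\<forall>e\<in>E. \<exists>k\<in>I. \<forall>i\<in>I. le k i \<longrightarrow> spec_le X e (f i)))"

text \<open>The convergence class I restricted to nets whose index set lives in the type 'i is topological.\<close>
definition Irr_conv_topological :: "'a topology \<Rightarrow> 'i itself \<Rightarrow> bool" where
  "Irr_conv_topological X _ \<longleftrightarrow> (\<exists>\<sigma>::'a topology. topspace \<sigma> = topspace X \<and>
     (\<forall>(I::'i set) le f y. is_net X I le f \<and> y \<in> topspace X \<longrightarrow>
        (Irr_converges X I le f y \<longleftrightarrow>
          (\<forall>U. openin \<sigma> U \<and> y \<in> U \<longrightarrow> (\<exists>i0\<in>I. \<forall>i\<in>I. le i0 i \<longrightarrow> f i \<in> U)))))"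

end

theory Submission
  imports Defs
begin


lemma spec_le_top: "spec_le X x y \<Longrightarrow> x \<in> topspace X \<and> y \<in> topspace X"
  by (simp add: spec_le_def)

lemma spec_le_refl: "x \<in> topspace X \<Longrightarrow> spec_le X x x"
  unfolding spec_le_def using closure_of_subset[of "{x}" X] by auto

lemma cl_sing_mono: "y \<in> X closure_of {z} \<Longrightarrow> X closure_of {y} \<subseteq> X closure_of {z}"
  by (rule closure_of_minimal) auto

lemma spec_le_trans: assumes "spec_le X x y" "spec_le X y z" shows "spec_le X x z"
proof -
  have a: "y \<in> X closure_of {z}" "x \<in> X closure_of {y}" "x \<in> topspace X" "z \<in> topspace X"
    using assms by (auto simp: spec_le_def)
  have "X closure_of {y} \<subseteq> X closure_of {z}" using a(1) by (rule cl_sing_mono)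
  then show ?thesis using a by (auto simp: spec_le_def)
qed

lemma spec_le_antisym: assumes "t0_space X" "spec_le X x y" "spec_le X y x" shows "x = y"
proof -
  have a: "y \<in> X closure_of {x}" "x \<in> X closure_of {y}" "x \<in> topspace X" "y \<in> topspace X"
    using assms by (auto simp: spec_le_def)
  have "X closure_of {x} = X closure_of {y}"
    using cl_sing_mono[OF a(1)] cl_sing_mono[OF a(2)] by (rule subset_antisym[rotated])
  then show ?thesis using assms(1) a(3,4) unfolding t0_space_closure_of_sing by auto
qed

lemma ub_iff: assumes "G \<subseteq> topspace X" "u \<in> topspace X"
  shows "(\<forall>g\<in>G. spec_le X g u) \<longleftrightarrow> X closure_of G \<subseteq> X closure_of {u}"
proof
  assume "\<forall>g\<in>G. spec_le X g u"
  then have "G \<subseteq> X closure_of {u}" by (auto simp: spec_le_def)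
  then show "X closure_of G \<subseteq> X closure_of {u}" by (rule closure_of_minimal) simp
next
  assume h: "X closure_of G \<subseteq> X closure_of {u}"
  have "G \<subseteq> X closure_of G" using assms(1) by (rule closure_of_subset)
  then show "\<forall>g\<in>G. spec_le X g u" using h assms by (auto simp: spec_le_def)
qed

lemma sup_closure_eq:
  assumes "is_spec_sup X E s" "E \<subseteq> topspace X" "F \<subseteq> topspace X" "X closure_of F = X closure_of E"
  shows "is_spec_sup X F s"
proof -
  have "\<And>u. u \<in> topspace X \<Longrightarrow> (\<forall>g\<in>F. spec_le X g u) \<longleftrightarrow> (\<forall>g\<in>E. spec_le X g u)"
    using ub_iff[OF assms(2)] ub_iff[OF assms(3)] assms(4) by simp
  then show ?thesis using assms(1) unfolding is_spec_sup_def by simp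
qed

lemma sup_unique: assumes "t0_space X" "is_spec_sup X E s" "is_spec_sup X E t" shows "s = t"
proof -
  have "spec_le X s t" "spec_le X t s" using assms(2,3) unfolding is_spec_sup_def by auto
  then show ?thesis using spec_le_antisym[OF assms(1)] by auto
qed

lemma spec_sup_eq: "t0_space X \<Longrightarrow> is_spec_sup X E s \<Longrightarrow> spec_sup X E = s"
  unfolding spec_sup_def by (rule the_equality) (auto intro: sup_unique)

lemma irrD: "irreducible_in X E \<Longrightarrow> closedin X A1 \<Longrightarrow> closedin X A2 \<Longrightarrow> E \<subseteq> A1 \<union> A2 \<Longrightarrow> E \<subseteq> A1 \<or> E \<subseteq> A2"
  unfolding irreducible_in_def by auto

lemma irrI: "E \<noteq> {} \<Longrightarrow> E \<subseteq> topspace X \<Longrightarrow>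
   (\<And>A1 A2. closedin X A1 \<Longrightarrow> closedin X A2 \<Longrightarrow> E \<subseteq> A1 \<union> A2 \<Longrightarrow> E \<subseteq> A1 \<or> E \<subseteq> A2) \<Longrightarrow> irreducible_in X E"
  unfolding irreducible_in_def by auto

lemma irr_closure_eq:
  assumes "irreducible_in X E" "F \<subseteq> topspace X" "X closure_of F = X closure_of E"
  shows "irreducible_in X F"
proof (rule irrI)
  have E: "E \<noteq> {}" "E \<subseteq> topspace X" using assms(1) by (auto simp: irreducible_in_def)
  have EE: "E \<subseteq> X closure_of E" using E(2) by (rule closure_of_subset)
  show "F \<noteq> {}"
  proof
    assume "F = {}"
    then have "X closure_of E = {}" using assms(3) by simp
    then show False using EE E(1) by auto
  qed
  show "F \<subseteq> topspace X" by fact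
  fix A1 A2 assume A: "closedin X A1" "closedin X A2" "F \<subseteq> A1 \<union> A2"
  have "X closure_of F \<subseteq> A1 \<union> A2" using A by (simp add: closure_of_minimal closedin_Un)
  then have "E \<subseteq> A1 \<union> A2" using assms(3) EE by auto
  then have d: "E \<subseteq> A1 \<or> E \<subseteq> A2" using irrD[OF assms(1) A(1,2)] by simp
  have FF: "F \<subseteq> X closure_of F" using assms(2) by (rule closure_of_subset)
  have "F \<subseteq> A" if "closedin X A" "E \<subseteq> A" for A
  proof -
    have "X closure_of E \<subseteq> A" using that(2,1) by (rule closure_of_minimal)
    then show ?thesis using assms(3) FF by auto
  qed
  then show "F \<subseteq> A1 \<or> F \<subseteq> A2" using d A(1,2) by auto
qed

lemma singleton_Irr:
  assumes "v \<in> topspace X"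
  shows "{v} \<in> Irr_plus X" "is_spec_sup X {v} v"
proof -
  show s: "is_spec_sup X {v} v" using assms unfolding is_spec_sup_def by (simp add: spec_le_refl)
  have "irreducible_in X {v}" using assms by (intro irrI) auto
  then show "{v} \<in> Irr_plus X" using s unfolding Irr_plus_def by auto
qed

lemma sup_in_closed:
  assumes t0: "t0_space X" and kb: "k_bounded_sober X"
    and irr: "irreducible_in X E" and sup: "is_spec_sup X E z" and A: "closedin X A" "E \<subseteq> A"
  shows "z \<in> A"
proof -
  let ?F = "X closure_of E"
  have Et: "E \<subseteq> topspace X" using irr by (simp add: irreducible_in_def)
  have Ft: "?F \<subseteq> topspace X" by (rule closure_of_subset_topspace)
  have irrF: "irreducible_in X ?F" using irr_closure_eq[OF irr Ft] by simp
  have supF: "is_spec_sup X ?F z" using sup_closure_eq[OF sup Et Ft] by simp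
  have "?F \<in> Irr_plus X" using irrF supF unfolding Irr_plus_def by auto
  moreover have "closedin X ?F" by simp
  ultimately have "\<exists>!x. x \<in> topspace X \<and> ?F = X closure_of {x}"
    using kb unfolding k_bounded_sober_def by simp
  then obtain c where c: "c \<in> topspace X" "?F = X closure_of {c}" by auto
  have cc: "c \<in> X closure_of {c}" using closure_of_subset[of "{c}" X] c(1) by auto
  have "is_spec_sup X ?F c"
    unfolding is_spec_sup_def
  proof (intro conjI ballI impI)
    show "c \<in> topspace X" by fact
    show "spec_le X e c" if "e \<in> ?F" for e using that c Ft unfolding spec_le_def by auto
    show "spec_le X c u" if "u \<in> topspace X" "\<forall>e\<in>?F. spec_le X e u" for u
      using that c cc by auto
  qed
  then have "c = z" using sup_unique[OF t0 _ supF] by simp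
  then have "z \<in> ?F" using c cc by auto
  moreover have "?F \<subseteq> A" using A(2,1) by (rule closure_of_minimal)
  ultimately show ?thesis by auto
qed




lemma wb_top: "Irr_way_below X x y \<Longrightarrow> x \<in> topspace X \<and> y \<in> topspace X"
  by (simp add: Irr_way_below_def)

lemma wb_le: assumes t0: "t0_space X" and "Irr_way_below X x y" shows "spec_le X x y"
proof -
  have y: "y \<in> topspace X" using assms(2) by (simp add: Irr_way_below_def)
  have "spec_sup X {y} = y" using spec_sup_eq[OF t0 singleton_Irr(2)[OF y]] .
  then have "{y} \<inter> spec_up X x \<noteq> {}"
    using assms(2) singleton_Irr(1)[OF y] spec_le_refl[OF y] unfolding Irr_way_below_def by auto
  then show ?thesis unfolding spec_up_def by auto
qed

lemma wb_mono_right: assumes "Irr_way_below X x y" "spec_le X y z" shows "Irr_way_below X x z"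
  unfolding Irr_way_below_def
proof (intro conjI ballI impI)
  show "x \<in> topspace X" using assms(1) by (simp add: Irr_way_below_def)
  show "z \<in> topspace X" using assms(2) by (simp add: spec_le_def)
  fix E assume "E \<in> Irr_plus X" "spec_le X z (spec_sup X E)"
  then show "E \<inter> spec_up X x \<noteq> {}"
    using assms spec_le_trans[OF assms(2)] unfolding Irr_way_below_def by blast
qed

lemma wb_mono_left: assumes "spec_le X w x" "Irr_way_below X x y" shows "Irr_way_below X w y"
  unfolding Irr_way_below_def
proof (intro conjI ballI impI)
  show "w \<in> topspace X" using assms(1) by (simp add: spec_le_def)
  show "y \<in> topspace X" using assms(2) by (simp add: Irr_way_below_def)
  fix E assume "E \<in> Irr_plus X" "spec_le X y (spec_sup X E)"
  then have "E \<inter> spec_up X x \<noteq> {}" using assms(2) unfolding Irr_way_below_def by blast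
  moreover have "spec_up X x \<subseteq> spec_up X w"
    unfolding spec_up_def using spec_le_trans[OF assms(1)] by blast
  ultimately show "E \<inter> spec_up X w \<noteq> {}" by blast
qed

definition irr_open :: "'a topology \<Rightarrow> 'a set \<Rightarrow> bool" where
  "irr_open X U \<longleftrightarrow> U \<subseteq> topspace X \<and> (\<forall>u\<in>U. \<forall>v. spec_le X u v \<longrightarrow> v \<in> U) \<and>
     (\<forall>E\<in>Irr_plus X. spec_sup X E \<in> U \<longrightarrow> E \<inter> U \<noteq> {})"

lemma irr_openD:
  assumes "irr_open X U"
  shows "U \<subseteq> topspace X" "\<And>u v. u \<in> U \<Longrightarrow> spec_le X u v \<Longrightarrow> v \<in> U"
    "\<And>E. E \<in> Irr_plus X \<Longrightarrow> spec_sup X E \<in> U \<Longrightarrow> E \<inter> U \<noteq> {}"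
  using assms unfolding irr_open_def by auto

lemma irr_openI:
  assumes "U \<subseteq> topspace X" "\<And>u v. u \<in> U \<Longrightarrow> spec_le X u v \<Longrightarrow> v \<in> U"
    "\<And>E. E \<in> Irr_plus X \<Longrightarrow> spec_sup X E \<in> U \<Longrightarrow> E \<inter> U \<noteq> {}"
  shows "irr_open X U"
  using assms unfolding irr_open_def by auto

lemma irr_open_Int:
  assumes t0: "t0_space X" and U: "irr_open X U" and V: "irr_open X V"
  shows "irr_open X (U \<inter> V)"
proof -
  have "E \<inter> (U \<inter> V) \<noteq> {}" if E: "E \<in> Irr_plus X" and s: "spec_sup X E \<in> U \<inter> V" for E
  proof
    assume emp: "E \<inter> (U \<inter> V) = {}"
    obtain s0 where s0: "is_spec_sup X E s0" and irr: "irreducible_in X E"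
      using E unfolding Irr_plus_def by auto
    have ss: "spec_sup X E = s0" using spec_sup_eq[OF t0 s0] .
    have Et: "E \<subseteq> topspace X" using irr by (simp add: irreducible_in_def)
    have c1: "E - U \<subseteq> X closure_of (E - U)" using closure_of_subset[of "E - U" X] Et by auto
    have c2: "E - V \<subseteq> X closure_of (E - V)" using closure_of_subset[of "E - V" X] Et by auto
    have "E \<subseteq> X closure_of (E - U) \<union> X closure_of (E - V)"
      using emp c1 c2 by auto
    then have "E \<subseteq> X closure_of (E - U) \<or> E \<subseteq> X closure_of (E - V)"
      by (rule irrD[OF irr closedin_closure_of closedin_closure_of])
    moreover have False if W: "irr_open X W" "spec_sup X E \<in> W" "E \<subseteq> X closure_of (E - W)" for W
    proof -
      have cl: "X closure_of (E - W) = X closure_of E"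
      proof (rule subset_antisym)
        show "X closure_of (E - W) \<subseteq> X closure_of E" by (rule closure_of_mono) auto
        show "X closure_of E \<subseteq> X closure_of (E - W)" using W(3) by (rule closure_of_minimal) simp
      qed
      have t: "E - W \<subseteq> topspace X" using Et by auto
      have i2: "irreducible_in X (E - W)" using irr_closure_eq[OF irr t cl] .
      have s2: "is_spec_sup X (E - W) s0" using sup_closure_eq[OF s0 Et t cl] .
      have "E - W \<in> Irr_plus X" using i2 s2 unfolding Irr_plus_def by auto
      moreover have "spec_sup X (E - W) \<in> W" using spec_sup_eq[OF t0 s2] ss W(2) by simp
      ultimately have "(E - W) \<inter> W \<noteq> {}" using irr_openD(3)[OF W(1)] by blast
      then show False by auto
    qed
    then have k: "\<And>W. irr_open X W \<Longrightarrow> spec_sup X E \<in> W \<Longrightarrow> E \<subseteq> X closure_of (E - W) \<Longrightarrow> False" .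
    have sU: "spec_sup X E \<in> U" and sV: "spec_sup X E \<in> V" using s by auto
    from calculation(1) show False
    proof
      assume "E \<subseteq> X closure_of (E - U)" then show False by (rule k[OF U sU])
    next
      assume "E \<subseteq> X closure_of (E - V)" then show False by (rule k[OF V sV])
    qed
  qed
  then show ?thesis
  proof (intro irr_openI)
    show "U \<inter> V \<subseteq> topspace X" using irr_openD(1)[OF U] by auto
    show "v \<in> U \<inter> V" if "u \<in> U \<inter> V" "spec_le X u v" for u v
      using irr_openD(2)[OF U, of u v] irr_openD(2)[OF V, of u v] that by simp
  qed
qed

lemma irr_open_Union: assumes "\<forall>K\<in>\<K>. irr_open X K" shows "irr_open X (\<Union>\<K>)"
proof (rule irr_openI)
  have o: "\<And>K. K \<in> \<K> \<Longrightarrow> irr_open X K" using assms by simp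
  show "\<Union>\<K> \<subseteq> topspace X" using irr_openD(1)[OF o] by auto
  show "v \<in> \<Union>\<K>" if "u \<in> \<Union>\<K>" "spec_le X u v" for u v
  proof -
    from that(1) obtain K where K: "K \<in> \<K>" "u \<in> K" by auto
    have "v \<in> K" by (rule irr_openD(2)[OF o[OF K(1)] K(2) that(2)])
    then show ?thesis using K(1) by auto
  qed
  show "E \<inter> \<Union>\<K> \<noteq> {}" if "E \<in> Irr_plus X" "spec_sup X E \<in> \<Union>\<K>" for E
  proof -
    from that(2) obtain K where K: "K \<in> \<K>" "spec_sup X E \<in> K" by auto
    have "E \<inter> K \<noteq> {}" by (rule irr_openD(3)[OF o[OF K(1)] that(1) K(2)])
    then show ?thesis using K(1) by auto
  qed
qed

lemma istopology_irr_open: "t0_space X \<Longrightarrow> istopology (irr_open X)"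
  unfolding istopology_def
proof (intro conjI allI impI)
  fix S T assume "t0_space X" "irr_open X S" "irr_open X T"
  then show "irr_open X (S \<inter> T)" by (rule irr_open_Int)
next
  fix K :: "'a set set" assume "\<forall>k\<in>K. irr_open X k"
  then show "irr_open X (\<Union>K)" by (rule irr_open_Union)
qed

lemma irr_open_topspace: "irr_open X (topspace X)"
proof (rule irr_openI)
  show "E \<inter> topspace X \<noteq> {}" if "E \<in> Irr_plus X" for E
    using that unfolding Irr_plus_def irreducible_in_def by auto
qed (auto dest: spec_le_top)

lemma topspace_irr: assumes t0: "t0_space X" shows "topspace (topology (irr_open X)) = topspace X"
proof -
  have o: "openin (topology (irr_open X)) = irr_open X" using istopology_irr_open[OF t0] by simp
  have "\<Union>{U. irr_open X U} = topspace X"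
  proof (rule subset_antisym)
    show "\<Union>{U. irr_open X U} \<subseteq> topspace X" using irr_openD(1) by auto
    show "topspace X \<subseteq> \<Union>{U. irr_open X U}" using irr_open_topspace[of X] by auto
  qed
  then show ?thesis unfolding topspace_def o .
qed

lemma interpolate:
  assumes t0: "t0_space X" and kb: "k_bounded_sober X" and cont: "Irr_continuous X"
    and es: "Irr_way_below X e s"
  shows "\<exists>w. Irr_way_below X e w \<and> Irr_way_below X w s"
proof -
  have st: "s \<in> topspace X" using es by (simp add: Irr_way_below_def)
  define W where "W = Irr_waydown X s"
  define D where "D = (\<Union>z\<in>W. Irr_waydown X z)"
  have Wi: "irreducible_in X W" "is_spec_sup X W s" using cont st unfolding Irr_continuous_def W_def by auto
  have Wt: "z \<in> topspace X" "Irr_way_below X z s" if "z \<in> W" for z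
    using that unfolding W_def Irr_waydown_def by auto
  have zi: "irreducible_in X (Irr_waydown X z)" "is_spec_sup X (Irr_waydown X z) z" if "z \<in> W" for z
    using cont Wt[OF that] unfolding Irr_continuous_def by auto
  have Dt: "D \<subseteq> topspace X" unfolding D_def Irr_waydown_def by auto
  have Dne: "D \<noteq> {}"
  proof -
    obtain z where "z \<in> W" using Wi(1) unfolding irreducible_in_def by auto
    then show ?thesis using zi unfolding D_def irreducible_in_def by auto
  qed
  have Dle: "spec_le X d s" if "d \<in> D" for d
  proof -
    from that obtain z where z: "z \<in> W" "d \<in> Irr_waydown X z" unfolding D_def by auto
    have "spec_le X d z" using z(2) wb_le[OF t0] unfolding Irr_waydown_def by auto
    moreover have "spec_le X z s" using Wt[OF z(1)] wb_le[OF t0] by auto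
    ultimately show ?thesis by (rule spec_le_trans)
  qed
  have Dirr: "irreducible_in X D"
    unfolding irreducible_in_def
  proof (intro conjI allI impI Dne Dt)
    fix A1 A2 assume A: "closedin X A1 \<and> closedin X A2 \<and> D \<subseteq> A1 \<union> A2"
    have A1: "closedin X A1" and A2: "closedin X A2" and AD: "D \<subseteq> A1 \<union> A2" using A by auto
    have "z \<in> A1 \<union> A2" if z: "z \<in> W" for z
    proof -
      have "Irr_waydown X z \<subseteq> A1 \<union> A2" using AD z unfolding D_def by auto
      then have "Irr_waydown X z \<subseteq> A1 \<or> Irr_waydown X z \<subseteq> A2"
        by (rule irrD[OF zi(1)[OF z] A1 A2])
      then show ?thesis
      proof
        assume "Irr_waydown X z \<subseteq> A1"
        then have "z \<in> A1" by (rule sup_in_closed[OF t0 kb zi[OF z] A1])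
        then show ?thesis by simp
      next
        assume "Irr_waydown X z \<subseteq> A2"
        then have "z \<in> A2" by (rule sup_in_closed[OF t0 kb zi[OF z] A2])
        then show ?thesis by simp
      qed
    qed
    then have "W \<subseteq> A1 \<union> A2" by auto
    then have "W \<subseteq> A1 \<or> W \<subseteq> A2" by (rule irrD[OF Wi(1) A1 A2])
    then have "s \<in> A1 \<or> s \<in> A2"
    proof
      assume "W \<subseteq> A1" then show ?thesis using sup_in_closed[OF t0 kb Wi A1] by simp
    next
      assume "W \<subseteq> A2" then show ?thesis using sup_in_closed[OF t0 kb Wi A2] by simp
    qed
    moreover have "D \<subseteq> X closure_of {s}" using Dle unfolding spec_le_def by auto
    moreover have "X closure_of {s} \<subseteq> A1" if "s \<in> A1" using that A by (intro closure_of_minimal) auto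
    moreover have "X closure_of {s} \<subseteq> A2" if "s \<in> A2" using that A by (intro closure_of_minimal) auto
    ultimately show "D \<subseteq> A1 \<or> D \<subseteq> A2" by auto
  qed
  have Dsup: "is_spec_sup X D s"
    unfolding is_spec_sup_def
  proof (intro conjI ballI impI st)
    show "spec_le X d s" if "d \<in> D" for d using Dle that .
    fix u assume u: "u \<in> topspace X" "\<forall>d\<in>D. spec_le X d u"
    have "spec_le X z u" if z: "z \<in> W" for z
    proof -
      have "\<forall>d\<in>Irr_waydown X z. spec_le X d u" using u(2) z unfolding D_def by auto
      then show ?thesis using zi(2)[OF z] u(1) unfolding is_spec_sup_def by auto
    qed
    then show "spec_le X s u" using Wi(2) u(1) unfolding is_spec_sup_def by auto
  qed
  have "D \<in> Irr_plus X" using Dirr Dsup unfolding Irr_plus_def by auto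
  moreover have "spec_sup X D = s" using spec_sup_eq[OF t0 Dsup] .
  ultimately have "D \<inter> spec_up X e \<noteq> {}" using es spec_le_refl[OF st] unfolding Irr_way_below_def by auto
  then obtain d z where dz: "z \<in> W" "d \<in> Irr_waydown X z" "spec_le X e d"
    unfolding D_def spec_up_def by auto
  have "Irr_way_below X e z" using wb_mono_left[OF dz(3)] dz(2) unfolding Irr_waydown_def by auto
  then show ?thesis using Wt[OF dz(1)] by blast
qed

lemma waydown_up_open:
  assumes t0: "t0_space X" and kb: "k_bounded_sober X" and cont: "Irr_continuous X"
  shows "irr_open X {z \<in> topspace X. Irr_way_below X e z}"
proof (rule irr_openI)
  show "{z \<in> topspace X. Irr_way_below X e z} \<subseteq> topspace X" by auto
  show "v \<in> {z \<in> topspace X. Irr_way_below X e z}"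
    if "u \<in> {z \<in> topspace X. Irr_way_below X e z}" "spec_le X u v" for u v
  proof -
    have ev: "Irr_way_below X e v" using that wb_mono_right by auto
    then show ?thesis using wb_top[OF ev] by simp
  qed
  fix E assume E: "E \<in> Irr_plus X" and s: "spec_sup X E \<in> {z \<in> topspace X. Irr_way_below X e z}"
  obtain w where w: "Irr_way_below X e w" "Irr_way_below X w (spec_sup X E)"
    using interpolate[OF t0 kb cont] s by blast
  have st: "spec_sup X E \<in> topspace X" using s by simp
  have "E \<inter> spec_up X w \<noteq> {}"
    using w(2) E spec_le_refl[OF st] unfolding Irr_way_below_def by auto
  then obtain e' where e': "e' \<in> E" "spec_le X w e'" unfolding spec_up_def by auto
  have ee: "Irr_way_below X e e'" using wb_mono_right[OF w(1) e'(2)] .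
  then show "E \<inter> {z \<in> topspace X. Irr_way_below X e z} \<noteq> {}" using e'(1) wb_top[OF ee] by auto
qed



lemma L_A:
  assumes t0: "t0_space X" and kb: "k_bounded_sober X" and cont: "Irr_continuous X"
  shows "Irr_conv_topological X (TYPE('i))"
proof -
  let ?\<sigma> = "topology (irr_open X)"
  have o: "openin ?\<sigma> = irr_open X" using istopology_irr_open[OF t0] by simp
  have ts: "topspace ?\<sigma> = topspace X" by (rule topspace_irr[OF t0])
  have main: "Irr_converges X I le f y \<longleftrightarrow>
      (\<forall>U. openin ?\<sigma> U \<and> y \<in> U \<longrightarrow> (\<exists>i0\<in>I. \<forall>i\<in>I. le i0 i \<longrightarrow> f i \<in> U))"
    if net: "is_net X I le f" and y: "y \<in> topspace X" for I :: "'i set" and le f y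
  proof
    assume "Irr_converges X I le f y"
    then obtain E where E: "E \<in> Irr_plus X" "spec_le X y (spec_sup X E)"
      and ev: "\<forall>e\<in>E. \<exists>k\<in>I. \<forall>i\<in>I. le k i \<longrightarrow> spec_le X e (f i)"
      unfolding Irr_converges_def by auto
    show "\<forall>U. openin ?\<sigma> U \<and> y \<in> U \<longrightarrow> (\<exists>i0\<in>I. \<forall>i\<in>I. le i0 i \<longrightarrow> f i \<in> U)"
    proof (intro allI impI)
      fix U assume U: "openin ?\<sigma> U \<and> y \<in> U"
      then have Uo: "irr_open X U" using o by simp
      have "spec_sup X E \<in> U" using irr_openD(2)[OF Uo _ E(2)] U by simp
      then have "E \<inter> U \<noteq> {}" by (rule irr_openD(3)[OF Uo E(1)])
      then obtain e where e: "e \<in> E" "e \<in> U" by auto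
      then obtain k where k: "k \<in> I" "\<forall>i\<in>I. le k i \<longrightarrow> spec_le X e (f i)" using ev by auto
      have "\<forall>i\<in>I. le k i \<longrightarrow> f i \<in> U"
      proof (intro ballI impI)
        fix i assume "i \<in> I" "le k i"
        then have "spec_le X e (f i)" using k(2) by simp
        then show "f i \<in> U" by (rule irr_openD(2)[OF Uo e(2)])
      qed
      then show "\<exists>i0\<in>I. \<forall>i\<in>I. le i0 i \<longrightarrow> f i \<in> U" using k(1) by auto
    qed
  next
    assume T: "\<forall>U. openin ?\<sigma> U \<and> y \<in> U \<longrightarrow> (\<exists>i0\<in>I. \<forall>i\<in>I. le i0 i \<longrightarrow> f i \<in> U)"
    let ?E = "Irr_waydown X y"
    have Ei: "irreducible_in X ?E" "is_spec_sup X ?E y" using cont y unfolding Irr_continuous_def by auto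
    have EI: "?E \<in> Irr_plus X" using Ei unfolding Irr_plus_def by auto
    have sE: "spec_sup X ?E = y" using spec_sup_eq[OF t0 Ei(2)] .
    have ev: "\<exists>k\<in>I. \<forall>i\<in>I. le k i \<longrightarrow> spec_le X e (f i)" if e: "e \<in> ?E" for e
    proof -
      let ?U = "{z \<in> topspace X. Irr_way_below X e z}"
      have "openin ?\<sigma> ?U" using waydown_up_open[OF t0 kb cont] o by simp
      moreover have "y \<in> ?U" using e y unfolding Irr_waydown_def by auto
      ultimately have oU: "openin ?\<sigma> ?U \<and> y \<in> ?U" by simp
      have "\<exists>i0\<in>I. \<forall>i\<in>I. le i0 i \<longrightarrow> f i \<in> ?U" using mp[OF spec[OF T, of ?U] oU] .
      then obtain i0 where i0: "i0 \<in> I" "\<forall>i\<in>I. le i0 i \<longrightarrow> f i \<in> ?U" by auto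
      have "\<forall>i\<in>I. le i0 i \<longrightarrow> spec_le X e (f i)"
      proof (intro ballI impI)
        fix i assume "i \<in> I" "le i0 i"
        then have "Irr_way_below X e (f i)" using i0(2) by simp
        then show "spec_le X e (f i)" by (rule wb_le[OF t0])
      qed
      then show ?thesis using i0(1) by auto
    qed
    have "spec_le X y (spec_sup X ?E)" using sE spec_le_refl[OF y] by simp
    then show "Irr_converges X I le f y" unfolding Irr_converges_def using EI ev by auto
  qed
  show ?thesis unfolding Irr_conv_topological_def
  proof (intro exI[of _ ?\<sigma>] conjI ts allI impI)
    fix I :: "'i set" and le f y assume "is_net X I le f \<and> y \<in> topspace X"
    then show "Irr_converges X I le f y \<longleftrightarrow>
      (\<forall>U. openin ?\<sigma> U \<and> y \<in> U \<longrightarrow> (\<exists>i0\<in>I. \<forall>i\<in>I. le i0 i \<longrightarrow> f i \<in> U))"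
      using main by simp
  qed
qed



definition dec :: "'a set set \<Rightarrow> 'a" where "dec a = the_elem (\<Inter> a)"
definition enc :: "'a set \<Rightarrow> 'a \<Rightarrow> 'a set set" where "enc U u = (\<lambda>v. {u, v}) ` U"

lemma dec_single[simp]: "dec {{e}} = e" unfolding dec_def by simp

lemma enc_Union: "u \<in> U \<Longrightarrow> \<Union>(enc U u) = U" unfolding enc_def by auto

lemma enc_dec: assumes "u \<in> U" shows "dec (enc U u) = u"
proof -
  have "\<Inter>(enc U u) = {u}"
  proof (rule subset_antisym)
    have "{u, u} \<in> enc U u" using assms unfolding enc_def by auto
    then show "\<Inter>(enc U u) \<subseteq> {u}" by auto
    show "{u} \<subseteq> \<Inter>(enc U u)" unfolding enc_def by auto
  qed
  then show ?thesis unfolding dec_def by simp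
qed

lemma L_B:
  fixes X :: "'a topology"
  assumes t0: "t0_space X" and kb: "k_bounded_sober X"
    and top: "Irr_conv_topological X TYPE('a set set)"
  shows "Irr_continuous X"
proof -
  obtain \<sigma> :: "'a topology" where ts: "topspace \<sigma> = topspace X"
    and H0: "\<forall>(I::'a set set set) le f y. is_net X I le f \<and> y \<in> topspace X \<longrightarrow>
        (Irr_converges X I le f y \<longleftrightarrow>
          (\<forall>U. openin \<sigma> U \<and> y \<in> U \<longrightarrow> (\<exists>i0\<in>I. \<forall>i\<in>I. le i0 i \<longrightarrow> f i \<in> U)))"
    using top unfolding Irr_conv_topological_def by auto
  have H: "Irr_converges X I le f y \<longleftrightarrow>
          (\<forall>U. openin \<sigma> U \<and> y \<in> U \<longrightarrow> (\<exists>i0\<in>I. \<forall>i\<in>I. le i0 i \<longrightarrow> f i \<in> U))"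
    if "is_net X I le f" "y \<in> topspace X" for I :: "'a set set set" and le f y
    using H0 that by simp
  have up: "u \<in> U" if U: "openin \<sigma> U" "v \<in> U" "spec_le X v u" for U v u
  proof -
    have vt: "v \<in> topspace X" and ut: "u \<in> topspace X" using spec_le_top[OF U(3)] by auto
    define I :: "'a set set set" where "I = {{}}"
    have net: "is_net X I (\<lambda>_ _. True) (\<lambda>_. u)" unfolding is_net_def I_def using ut by auto
    have sv: "spec_sup X {v} = v" using spec_sup_eq[OF t0 singleton_Irr(2)[OF vt]] .
    have "Irr_converges X I (\<lambda>_ _. True) (\<lambda>_. u) v"
      unfolding Irr_converges_def
    proof (rule bexI[of _ "{v}"])
      show "{v} \<in> Irr_plus X" using singleton_Irr(1)[OF vt] .
      show "spec_le X v (spec_sup X {v}) \<and> (\<forall>e\<in>{v}. \<exists>k\<in>I. \<forall>i\<in>I. True \<longrightarrow> spec_le X e u)"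
        using spec_le_refl[OF vt] U(3) sv unfolding I_def by auto
    qed
    then have "\<forall>U. openin \<sigma> U \<and> v \<in> U \<longrightarrow> (\<exists>i0\<in>I. \<forall>i\<in>I. True \<longrightarrow> u \<in> U)"
      using H[OF net vt] by simp
    then have "\<exists>i0\<in>I. \<forall>i\<in>I. True \<longrightarrow> u \<in> U" using U(1,2) by simp
    then show ?thesis by auto
  qed
  have inacc: "E \<inter> U \<noteq> {}" if U: "openin \<sigma> U" and E: "E \<in> Irr_plus X" and sU: "spec_sup X E \<in> U" for U E
  proof -
    obtain s where s: "is_spec_sup X E s" and Ei: "irreducible_in X E" using E unfolding Irr_plus_def by auto
    have ss: "spec_sup X E = s" using spec_sup_eq[OF t0 s] .
    have Et: "E \<subseteq> topspace X" using Ei unfolding irreducible_in_def by auto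
    have st: "s \<in> topspace X" using s unfolding is_spec_sup_def by auto
    define I :: "'a set set set" where "I = (\<lambda>e. {{e}}) ` E"
    define le where "le a b \<longleftrightarrow> spec_le X (dec a) (dec b)" for a b :: "'a set set"
    have net: "is_net X I le dec" unfolding is_net_def
    proof (intro conjI ballI impI)
      show "le i i" if "i \<in> I" for i
      proof -
        from that obtain e where "e \<in> E" "i = {{e}}" unfolding I_def by auto
        then show ?thesis using Et spec_le_refl[of e X] unfolding le_def by auto
      qed
      show "le i k" if "i \<in> I" "j \<in> I" "k \<in> I" "le i j \<and> le j k" for i j k
        using that(4) spec_le_trans unfolding le_def by auto
      show "dec ` I \<subseteq> topspace X" using Et unfolding I_def by auto
    qed
    have "Irr_converges X I le dec s" unfolding Irr_converges_def
    proof (rule bexI[OF _ E])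
      have "\<forall>e\<in>E. \<exists>k\<in>I. \<forall>i\<in>I. le k i \<longrightarrow> spec_le X e (dec i)"
      proof
        fix e assume e: "e \<in> E"
        have "{{e}} \<in> I" using e unfolding I_def by auto
        moreover have "\<forall>i\<in>I. le {{e}} i \<longrightarrow> spec_le X e (dec i)" unfolding le_def by simp
        ultimately show "\<exists>k\<in>I. \<forall>i\<in>I. le k i \<longrightarrow> spec_le X e (dec i)" by blast
      qed
      then show "spec_le X s (spec_sup X E) \<and> (\<forall>e\<in>E. \<exists>k\<in>I. \<forall>i\<in>I. le k i \<longrightarrow> spec_le X e (dec i))"
        using ss spec_le_refl[OF st] by simp
    qed
    then have "\<forall>U. openin \<sigma> U \<and> s \<in> U \<longrightarrow> (\<exists>i0\<in>I. \<forall>i\<in>I. le i0 i \<longrightarrow> dec i \<in> U)"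
      using H[OF net st] by simp
    then have "\<exists>i0\<in>I. \<forall>i\<in>I. le i0 i \<longrightarrow> dec i \<in> U" using U sU ss by simp
    then obtain i0 where i0: "i0 \<in> I" "\<forall>i\<in>I. le i0 i \<longrightarrow> dec i \<in> U" by auto
    then obtain e where e: "e \<in> E" "i0 = {{e}}" unfolding I_def by auto
    have "le i0 i0" using net i0(1) unfolding is_net_def by simp
    then have "dec i0 \<in> U" using i0 by simp
    then show ?thesis using e by auto
  qed
  show ?thesis unfolding Irr_continuous_def
  proof (intro ballI)
    fix x assume x: "x \<in> topspace X"
    define I where "I = {enc U u | U u. openin \<sigma> U \<and> x \<in> U \<and> u \<in> U}"
    define le :: "'a set set \<Rightarrow> 'a set set \<Rightarrow> bool" where "le a b \<longleftrightarrow> \<Union>b \<subseteq> \<Union>a" for a b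
    have net: "is_net X I le dec" unfolding is_net_def
    proof (intro conjI ballI impI)
      show "le i i" if "i \<in> I" for i unfolding le_def by simp
      show "le i k" if "i \<in> I" "j \<in> I" "k \<in> I" "le i j \<and> le j k" for i j k
        using that(4) unfolding le_def by (meson order_trans)
      show "dec ` I \<subseteq> topspace X"
      proof
        fix a assume "a \<in> dec ` I"
        then obtain U u where "openin \<sigma> U" "u \<in> U" "a = dec (enc U u)" unfolding I_def by auto
        then show "a \<in> topspace X" using enc_dec openin_subset ts by fastforce
      qed
    qed
    have conv: "\<forall>U. openin \<sigma> U \<and> x \<in> U \<longrightarrow> (\<exists>i0\<in>I. \<forall>i\<in>I. le i0 i \<longrightarrow> dec i \<in> U)"
    proof (intro allI impI)
      fix U assume U: "openin \<sigma> U \<and> x \<in> U"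
      have "enc U x \<in> I" using U unfolding I_def by auto
      moreover have "\<forall>i\<in>I. le (enc U x) i \<longrightarrow> dec i \<in> U"
      proof (intro ballI impI)
        fix i assume i: "i \<in> I" "le (enc U x) i"
        then obtain V v where V: "openin \<sigma> V" "v \<in> V" "i = enc V v" unfolding I_def by auto
        have "V \<subseteq> U" using i(2) V(2,3) enc_Union[of v V] enc_Union[of x U] U unfolding le_def by simp
        then show "dec i \<in> U" using V enc_dec[OF V(2)] by auto
      qed
      ultimately show "\<exists>i0\<in>I. \<forall>i\<in>I. le i0 i \<longrightarrow> dec i \<in> U" by blast
    qed
    have "Irr_converges X I le dec x" using H[OF net x] conv by simp
    then obtain E where E: "E \<in> Irr_plus X" "spec_le X x (spec_sup X E)"
      and ev: "\<forall>e\<in>E. \<exists>k\<in>I. \<forall>i\<in>I. le k i \<longrightarrow> spec_le X e (dec i)"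
      unfolding Irr_converges_def by auto
    obtain s where s: "is_spec_sup X E s" and Ei: "irreducible_in X E" using E unfolding Irr_plus_def by auto
    have ss: "spec_sup X E = s" using spec_sup_eq[OF t0 s] .
    have Et: "E \<subseteq> topspace X" using Ei unfolding irreducible_in_def by auto
    have xs: "spec_le X x s" using E(2) ss by simp
    let ?W = "Irr_waydown X x"
    have EW: "E \<subseteq> ?W"
    proof
      fix e assume e: "e \<in> E"
      then obtain k where k: "k \<in> I" "\<forall>i\<in>I. le k i \<longrightarrow> spec_le X e (dec i)" using ev by auto
      then obtain U0 u0 where U0: "openin \<sigma> U0" "x \<in> U0" "u0 \<in> U0" "k = enc U0 u0"
        unfolding I_def by auto
      have eU: "spec_le X e u" if u: "u \<in> U0" for u
      proof -
        have "enc U0 u \<in> I" using U0 u unfolding I_def by auto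
        moreover have "le k (enc U0 u)" using U0 enc_Union[OF u] enc_Union[OF U0(3)] unfolding le_def by simp
        ultimately have "spec_le X e (dec (enc U0 u))" using k(2) by simp
        then show ?thesis using enc_dec[OF u] by simp
      qed
      have "Irr_way_below X e x" unfolding Irr_way_below_def
      proof (intro conjI ballI impI x)
        show "e \<in> topspace X" using e Et by auto
        fix E' assume E': "E' \<in> Irr_plus X" "spec_le X x (spec_sup X E')"
        have "spec_sup X E' \<in> U0" by (rule up[OF U0(1) U0(2) E'(2)])
        then have "E' \<inter> U0 \<noteq> {}" by (rule inacc[OF U0(1) E'(1)])
        then obtain u where "u \<in> E'" "u \<in> U0" by auto
        then show "E' \<inter> spec_up X e \<noteq> {}" using eU spec_le_top unfolding spec_up_def by fastforce
      qed
      then show "e \<in> ?W" unfolding Irr_waydown_def using e Et by auto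
    qed
    have Wt: "?W \<subseteq> topspace X" unfolding Irr_waydown_def by auto
    have Wx: "spec_le X w x" if "w \<in> ?W" for w using that wb_le[OF t0] unfolding Irr_waydown_def by auto
    have sup: "is_spec_sup X ?W x" unfolding is_spec_sup_def
    proof (intro conjI ballI impI x)
      show "spec_le X w x" if "w \<in> ?W" for w using Wx that .
      fix u assume u: "u \<in> topspace X" "\<forall>w\<in>?W. spec_le X w u"
      then have "\<forall>e\<in>E. spec_le X e u" using EW by auto
      then have "spec_le X s u" using s u(1) unfolding is_spec_sup_def by auto
      then show "spec_le X x u" by (rule spec_le_trans[OF xs])
    qed
    have cl: "X closure_of ?W = X closure_of E"
    proof (rule subset_antisym)
      show "X closure_of E \<subseteq> X closure_of ?W" using EW by (rule closure_of_mono)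
      have "X closure_of ?W \<subseteq> X closure_of {x}" using ub_iff[OF Wt x] Wx by auto
      moreover have "s \<in> X closure_of E"
        by (rule sup_in_closed[OF t0 kb Ei s]) (simp_all add: closure_of_subset Et)
      then have "X closure_of {s} \<subseteq> X closure_of E" by (intro closure_of_minimal) auto
      moreover have "X closure_of {x} \<subseteq> X closure_of {s}" using xs unfolding spec_le_def by (intro cl_sing_mono) simp
      ultimately show "X closure_of ?W \<subseteq> X closure_of E" by auto
    qed
    have "irreducible_in X ?W" by (rule irr_closure_eq[OF Ei Wt cl])
    then show "irreducible_in X ?W \<and> is_spec_sup X ?W x" using sup by simp
  qed
qed

theorem theorem1p1:
  fixes X :: "'a topology"
  assumes "t0_space X" and "k_bounded_sober X"
  shows "(Irr_conv_topological X TYPE('a set set) \<longleftrightarrow> Irr_continuous X) \<and>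
         (Irr_continuous X \<longrightarrow> Irr_conv_topological X TYPE('i))"
proof -
  have A: "Irr_continuous X \<Longrightarrow> Irr_conv_topological X TYPE('i)" by (rule L_A[OF assms])
  have B: "Irr_conv_topological X TYPE('a set set) \<Longrightarrow> Irr_continuous X" by (rule L_B[OF assms])
  have C: "Irr_continuous X \<Longrightarrow> Irr_conv_topological X TYPE('a set set)" by (rule L_A[OF assms])
  show ?thesis using A B C by blast
qed


end
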